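(* Fix a test policy $\pi$ and initial condition $\xi\in\mathcal X$, and suppose there is $L_\pi\ge0$ with $\|\bar\pi(x)-\bar\pi(y)\|\le L_\pi\|x-y\|$ for all $x,y$ and $\bar\pi\in\{\pi,\pi_\star\}$. Let $f^{cl}_{\pi_\star}$ be $\eta$-locally $\delta$-ISS for some $\eta>0$, and assume its gain $\gamma$ satisfies $\gamma(x)\le O(x^{1+r})$ as $x\to0^+$ for some $r>0$. Choose constants $\mu,\alpha>0$ such that \[2L_\pi x+(x/\mu)^{1/(1+r)}\le\gamma^{-1}(x)\quad\text{for all }0\le x\le\alpha.\] If \[\max_{0\le t\le T-1}\mu\|\Delta_t^{\pi_\star}(\xi;\pi)\|^{1+r}\le\alpha\quad\text{and}\quad\max_{0\le t\le T-1}\Big(2L_\pi\mu\|\Delta_t^{\pi_\star}(\xi;\pi)\|^{1+r}+\|\Delta_t^{\pi_\star}(\xi;\pi)\|\Big)\le\eta,\] then for all $1\le t\le T$, \[\|x_t^{\pi_\star}(\xi)-x_t^\pi(\xi)\|\le\max_{0\le k\le t-1}\mu\|\Delta_k^{\pi_\star}(\xi;\pi)\|^{1+r}.\]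
   Context: Dynamics $x_{t+1}=f(x_t,u_t)$, $x_0=\xi$, $x_t\in\mathbb R^d,u_t\in\mathbb R^m$. For a policy $\pi$, perturbed closed loop $x_{t+1}=f^{cl}_\pi(x_t,\Delta_t):=f(x_t,\pi(x_t)+\Delta_t)$, states $x_t^\pi(\xi,\{\Delta_s\})$, $x_t^\pi(\xi):=x_t^\pi(\xi,\{0\})$. Initial conditions lie in a compact set $\mathcal X$. Norms: Euclidean for vectors, operator norm for matrices/tensors. Class $\mathcal K$: continuous, strictly increasing, vanishing at $0$; class $\mathcal{KL}$: $\beta(\cdot,t)$ class $\mathcal K$ for each $t$, $\beta(s,\cdot)$ decreasing. $f^{cl}_\pi$ is $\eta$-locally $\delta$-ISS if there are class $\mathcal{KL}$ $\beta$ and class $\mathcal K$ $\gamma$ with $\|x_t^\pi(\xi_1;\{\Delta_s\}_{s=0}^{t-1})-x_t^\pi(\xi_2;\{0\})\|\le\beta(\|\xi_1-\xi_2\|,t)+\gamma(\max_{0\le k\le t-1}\|\Delta_k\|)$ for all $\xi_1,\xi_2\in\mathcal X$, $t\in\mathbb N$, and perturbations with $\sup_t\|\Delta_t\|\le\eta$. $\gamma^{-1}$ is the inverse of $\gamma$ on its range (with $\gamma^{-1}(x)=+\infty$ for $x\ge\sup\gamma$). $\pi_\star$ is the expert policy; the discrepancy on the expert trajectory is $\Delta_t^{\pi_\star}(\xi;\pi):=\pi(x_t^{\pi_\star}(\xi))-\pi_\star(x_t^{\pi_\star}(\xi))$. *)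

theory Defs
  imports "HOL-Analysis.Analysis" "HOL-Library.Landau_Symbols"
begin

fun traj :: "('a \<Rightarrow> 'b \<Rightarrow> 'a) \<Rightarrow> ('a \<Rightarrow> 'b::real_vector) \<Rightarrow> 'a \<Rightarrow> (nat \<Rightarrow> 'b) \<Rightarrow> nat \<Rightarrow> 'a" where
  "traj f pol xi D 0 = xi"
| "traj f pol xi D (Suc t) = f (traj f pol xi D t) (pol (traj f pol xi D t) + D t)"

definition class_K :: "(real \<Rightarrow> real) \<Rightarrow> bool" where
  "class_K g \<longleftrightarrow> continuous_on {0..} g \<and> strict_mono_on {0..} g \<and> g 0 = 0"

definition class_KL :: "(real \<Rightarrow> nat \<Rightarrow> real) \<Rightarrow> bool" where
  "class_KL b \<longleftrightarrow> (\<forall>t. class_K (\<lambda>s. b s t)) \<and>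
     (\<forall>s\<ge>0. \<forall>t1 t2. t1 \<le> t2 \<longrightarrow> b s t2 \<le> b s t1)"

definition max_pert :: "(nat \<Rightarrow> 'b::real_normed_vector) \<Rightarrow> nat \<Rightarrow> real" where
  "max_pert D t = (if t = 0 then 0 else Max ((\<lambda>k. norm (D k)) ` {..<t}))"

definition local_dISS_with ::
  "('a::real_normed_vector \<Rightarrow> 'b \<Rightarrow> 'a) \<Rightarrow> ('a \<Rightarrow> 'b::real_normed_vector) \<Rightarrow> 'a set \<Rightarrow> real
     \<Rightarrow> (real \<Rightarrow> nat \<Rightarrow> real) \<Rightarrow> (real \<Rightarrow> real) \<Rightarrow> bool" where
  "local_dISS_with f pol X eta b g \<longleftrightarrow> class_KL b \<and> class_K g \<and>
     (\<forall>xi1\<in>X. \<forall>xi2\<in>X. \<forall>t. \<forall>D. (\<forall>s. norm (D s) \<le> eta) \<longrightarrow>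
        norm (traj f pol xi1 D t - traj f pol xi2 (\<lambda>_. 0) t)
          \<le> b (norm (xi1 - xi2)) t + g (max_pert D t))"

definition gamma_inv :: "(real \<Rightarrow> real) \<Rightarrow> real \<Rightarrow> ereal" where
  "gamma_inv g x = (if \<exists>s\<ge>0. g s = x then ereal (THE s. s \<ge> 0 \<and> g s = x) else \<infinity>)"

end

theory Submission
  imports Defs
begin

lemma gamma_bound:
  assumes K: "class_K g" and m: "0 \<le> m" and z: "0 \<le> z" and le: "ereal z \<le> gamma_inv g m"
  shows "g z \<le> m"
proof (cases "\<exists>s\<ge>0. g s = m")
  case True
  have sm: "strict_mono_on {0..} g" and c: "continuous_on {0..} g" and g0: "g 0 = 0"
    using K unfolding class_K_def by auto
  from True obtain s where s: "s \<ge> 0" "g s = m" by auto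
  have uniq: "\<And>s'. s' \<ge> 0 \<and> g s' = m \<Longrightarrow> s' = s"
    using strict_mono_on_eqD[OF sm] s by force
  have "(THE s. s \<ge> 0 \<and> g s = m) = s"
  proof (rule the_equality)
    show "s \<ge> 0 \<and> g s = m" using s by simp
  next
    fix s' assume "s' \<ge> 0 \<and> g s' = m" then show "s' = s" by (rule uniq)
  qed
  with le True have "z \<le> s" by (simp add: gamma_inv_def)
  then show ?thesis using strict_mono_on_leD[OF sm] s z by force
next
  case False
  have sm: "strict_mono_on {0..} g" and c: "continuous_on {0..} g" and g0: "g 0 = 0"
    using K unfolding class_K_def by auto
  show ?thesis
  proof (rule ccontr)
    assume "\<not> g z \<le> m"
    hence "m \<le> g z" by simp
    moreover have "continuous_on {0..z} g" using c by (rule continuous_on_subset) auto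
    ultimately obtain x where "0 \<le> x" "x \<le> z" "g x = m"
      using IVT'[of g 0 m z] g0 m z by auto
    with False show False by auto
  qed
qed

lemma traj_agree:
  assumes "\<And>s. s < n \<Longrightarrow> D s = pol (traj f pol xi (\<lambda>_. 0) s) - pol_star (traj f pol xi (\<lambda>_. 0) s)"
  shows "s \<le> n \<Longrightarrow> traj f pol_star xi D s = traj f pol xi (\<lambda>_. 0) s"
proof (induction s)
  case 0 then show ?case by simp
next
  case (Suc s)
  then show ?case using assms[of s] by simp
qed

theorem theorem1:
  fixes f :: "'a::euclidean_space \<Rightarrow> 'b::euclidean_space \<Rightarrow> 'a"
    and pol pol_star :: "'a \<Rightarrow> 'b"
    and X :: "'a set" and xi :: 'a
    and L eta r mu alpha :: real and T :: nat
    and beta :: "real \<Rightarrow> nat \<Rightarrow> real" and gamma :: "real \<Rightarrow> real"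
  assumes "compact X" and "xi \<in> X"
    and "L \<ge> 0"
    and "\<forall>x y. norm (pol x - pol y) \<le> L * norm (x - y)"
    and "\<forall>x y. norm (pol_star x - pol_star y) \<le> L * norm (x - y)"
    and "eta > 0"
    and "local_dISS_with f pol_star X eta beta gamma"
    and "r > 0"
    and "gamma \<in> O[at_right 0](\<lambda>x. x powr (1 + r))"
    and "mu > 0" and "alpha > 0"
    and "\<forall>x. 0 \<le> x \<and> x \<le> alpha \<longrightarrow>
           ereal (2 * L * x + (x / mu) powr (1 / (1 + r))) \<le> gamma_inv gamma x"
    and "\<forall>t<T. mu * norm (pol (traj f pol_star xi (\<lambda>_. 0) t) - pol_star (traj f pol_star xi (\<lambda>_. 0) t)) powr (1 + r) \<le> alpha"
    and "\<forall>t<T. 2 * L * mu * norm (pol (traj f pol_star xi (\<lambda>_. 0) t) - pol_star (traj f pol_star xi (\<lambda>_. 0) t)) powr (1 + r)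
              + norm (pol (traj f pol_star xi (\<lambda>_. 0) t) - pol_star (traj f pol_star xi (\<lambda>_. 0) t)) \<le> eta"
  shows "\<forall>t. 1 \<le> t \<and> t \<le> T \<longrightarrow>
           norm (traj f pol_star xi (\<lambda>_. 0) t - traj f pol xi (\<lambda>_. 0) t)
             \<le> Max ((\<lambda>k. mu * norm (pol (traj f pol_star xi (\<lambda>_. 0) k) - pol_star (traj f pol_star xi (\<lambda>_. 0) k)) powr (1 + r)) ` {..<t})"
proof -
  define x where "x k = traj f pol_star xi (\<lambda>_. 0) k" for k
  define y where "y k = traj f pol xi (\<lambda>_. 0) k" for k
  define d where "d k = norm (pol (x k) - pol_star (x k))" for k
  define a where "a k = mu * d k powr (1+r)" for k
  define M where "M t = (if t = 0 then 0 else Max (a ` {..<t}))" for t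
  have Lp: "\<And>u v. norm (pol u - pol v) \<le> L * norm (u - v)" using assms(4) by blast
  have Ls: "\<And>u v. norm (pol_star u - pol_star v) \<le> L * norm (u - v)" using assms(5) by blast
  have hypA: "\<And>k. k < T \<Longrightarrow> a k \<le> alpha" using assms(13) unfolding a_def d_def x_def by blast
  have hypE: "\<And>k. k < T \<Longrightarrow> 2 * L * a k + d k \<le> eta"
    using assms(14) unfolding a_def d_def x_def by (simp add: algebra_simps)
  have d_nn: "\<And>k. d k \<ge> 0" unfolding d_def by simp
  have a_nn: "\<And>k. a k \<ge> 0" unfolding a_def using assms(10) by simp
  have a_le_M: "\<And>k t. k < t \<Longrightarrow> a k \<le> M t" unfolding M_def by auto
  have M_ex: "\<And>t. 0 < t \<Longrightarrow> \<exists>j<t. M t = a j"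
  proof -
    fix t :: nat assume "0 < t"
    then have "Max (a ` {..<t}) \<in> a ` {..<t}" by (intro Max_in) auto
    then show "\<exists>j<t. M t = a j" using \<open>0 < t\<close> unfolding M_def by auto
  qed
  have M_nn: "\<And>t. M t \<ge> 0"
  proof -
    fix t :: nat show "M t \<ge> 0"
    proof (cases "t = 0")
      case True then show ?thesis by (simp add: M_def)
    next
      case False then obtain j where "j < t" "M t = a j" using M_ex by blast
      then show ?thesis using a_nn[of j] by simp
    qed
  qed
  have M_alpha: "\<And>t. t \<le> T \<Longrightarrow> M t \<le> alpha"
  proof -
    fix t :: nat assume tT: "t \<le> T" show "M t \<le> alpha"
    proof (cases "t = 0")
      case True then show ?thesis using assms(11) by (simp add: M_def)
    next
      case False then obtain j where "j < t" "M t = a j" using M_ex by blast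
      then show ?thesis using hypA[of j] tT by simp
    qed
  qed
  have d_bound: "\<And>k m. a k \<le> m \<Longrightarrow> d k \<le> (m / mu) powr (1 / (1 + r))"
  proof -
    fix k m assume akm: "a k \<le> m"
    have "d k powr (1+r) \<le> m / mu" using akm assms(10) unfolding a_def
      by (simp add: field_simps)
    hence "(d k powr (1+r)) powr (1/(1+r)) \<le> (m/mu) powr (1/(1+r))"
      using assms(8) by (intro powr_mono2) auto
    moreover have "(d k powr (1+r)) powr (1/(1+r)) = d k"
      using assms(8) d_nn[of k] by (simp add: powr_powr)
    ultimately show "d k \<le> (m / mu) powr (1 / (1 + r))" by simp
  qed
  have iss: "local_dISS_with f pol_star X eta beta gamma" by (rule assms(7))
  have gK: "class_K gamma" and bKL: "class_KL beta"
    and issb: "\<And>D t. (\<forall>s. norm (D s) \<le> eta) \<Longrightarrow>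
        norm (traj f pol_star xi D t - traj f pol_star xi (\<lambda>_. 0) t)
          \<le> beta (norm (xi - xi)) t + gamma (max_pert D t)"
    using iss assms(2) unfolding local_dISS_with_def by blast+
  have b0: "\<And>t. beta 0 t = 0" using bKL unfolding class_KL_def class_K_def by blast
  have key: "\<And>t. t \<le> T \<Longrightarrow> \<forall>s\<le>t. norm (x s - y s) \<le> M s"
  proof -
    fix t show "t \<le> T \<Longrightarrow> \<forall>s\<le>t. norm (x s - y s) \<le> M s"
    proof (induction t)
      case 0 then show ?case by (simp add: x_def y_def M_def)
    next
      case (Suc t)
      then have IH: "\<And>s. s \<le> t \<Longrightarrow> norm (x s - y s) \<le> M s" by simp
      have tT: "t < T" using Suc.prems by simp
      define D where "D s = (if s \<le> t then pol (y s) - pol_star (y s) else 0)" for s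
      define m where "m = M (Suc t)"
      have Dk: "\<And>k. k \<le> t \<Longrightarrow> norm (D k) \<le> d k + 2 * L * norm (x k - y k)"
      proof -
        fix k assume "k \<le> t"
        have Deq: "D k = (pol (y k) - pol (x k)) + (pol (x k) - pol_star (x k)) + (pol_star (x k) - pol_star (y k))"
          using \<open>k \<le> t\<close> unfolding D_def by simp
        hence "norm (D k) \<le> norm (pol (y k) - pol (x k)) + norm (pol (x k) - pol_star (x k)) + norm (pol_star (x k) - pol_star (y k))"
        proof -
          have "norm ((pol (y k) - pol (x k)) + (pol (x k) - pol_star (x k)) + (pol_star (x k) - pol_star (y k)))
            \<le> norm ((pol (y k) - pol (x k)) + (pol (x k) - pol_star (x k))) + norm (pol_star (x k) - pol_star (y k))"
            by (rule norm_triangle_ineq)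
          moreover have "norm ((pol (y k) - pol (x k)) + (pol (x k) - pol_star (x k)))
            \<le> norm (pol (y k) - pol (x k)) + norm (pol (x k) - pol_star (x k))"
            by (rule norm_triangle_ineq)
          ultimately show ?thesis using Deq by simp
        qed
        also have "\<dots> \<le> L * norm (y k - x k) + d k + L * norm (x k - y k)"
          using Lp Ls unfolding d_def by (intro add_mono) auto
        also have "\<dots> = d k + 2 * L * norm (x k - y k)" by (simp add: norm_minus_commute)
        finally show "norm (D k) \<le> d k + 2 * L * norm (x k - y k)" .
      qed
      have Deta: "\<forall>s. norm (D s) \<le> eta"
      proof
        fix k
        show "norm (D k) \<le> eta"
        proof (cases "k \<le> t")
          case False then show ?thesis using assms(6) unfolding D_def by simp
        next
          case True
          have kT: "k < T" using True tT by simp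
          show ?thesis
          proof (cases "k = 0")
            case True
            then have "norm (x k - y k) \<le> 0" using IH[of k] unfolding M_def by simp
            then have "norm (D k) \<le> d k" using Dk[of k] \<open>k \<le> t\<close> by simp
            then show ?thesis using hypE[OF kT] a_nn[of k] assms(3) 
              proof -
                have "0 \<le> 2 * L * a k" using a_nn[of k] assms(3) by simp
                then show ?thesis using hypE[OF kT] \<open>norm (D k) \<le> d k\<close> by linarith
              qed
          next
            case False
            then obtain j where j: "j < k" "M k = a j" using M_ex by blast
            have "norm (D k) \<le> d k + 2 * L * a j"
            proof -
              have "2 * L * norm (x k - y k) \<le> 2 * L * a j"
                using IH[of k] \<open>k \<le> t\<close> j assms(3) by (intro mult_left_mono) auto
              then show ?thesis using Dk[of k] \<open>k \<le> t\<close> by linarith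
            qed
            show ?thesis
            proof (cases "d j \<le> d k")
              case True
              have "d j powr (1+r) \<le> d k powr (1+r)" using True d_nn assms(8) by (intro powr_mono2) auto
              hence "a j \<le> a k" unfolding a_def using assms(10) by simp
              then show ?thesis using \<open>norm (D k) \<le> d k + 2 * L * a j\<close> hypE[OF kT] assms(3)

              proof -
                have "2 * L * a j \<le> 2 * L * a k" using \<open>a j \<le> a k\<close> assms(3) by (intro mult_left_mono) auto
                then show ?thesis using \<open>norm (D k) \<le> d k + 2 * L * a j\<close> hypE[OF kT] by linarith
              qed
            next
              case False
              have "j < T" using j kT by simp
              then show ?thesis using False \<open>norm (D k) \<le> d k + 2 * L * a j\<close> hypE[of j] by linarith
            qed
          qed
        qed
      qed
      have teq: "traj f pol_star xi D (Suc t) = y (Suc t)"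
        unfolding y_def by (rule traj_agree[where n="Suc t"]) (auto simp: D_def y_def)
      have "norm (y (Suc t) - x (Suc t)) \<le> beta 0 (Suc t) + gamma (max_pert D (Suc t))"
        using issb[OF Deta, of "Suc t"] teq unfolding x_def by simp
      hence e1: "norm (x (Suc t) - y (Suc t)) \<le> gamma (max_pert D (Suc t))"
        using b0 by (simp add: norm_minus_commute)
      have mpdef: "max_pert D (Suc t) = Max ((\<lambda>k. norm (D k)) ` {..<Suc t})"
        unfolding max_pert_def by simp
      have mp_nn: "max_pert D (Suc t) \<ge> 0"
        unfolding mpdef by (rule order_trans[OF norm_ge_zero[of "D 0"]]) (intro Max_ge, auto)
      have mp_le: "max_pert D (Suc t) \<le> 2 * L * m + (m / mu) powr (1 / (1 + r))"
        unfolding mpdef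
      proof (rule Max.boundedI)
        show "finite ((\<lambda>k. norm (D k)) ` {..<Suc t})" by simp
      next
        show "(\<lambda>k. norm (D k)) ` {..<Suc t} \<noteq> {}" by auto
      next
        fix v assume "v \<in> (\<lambda>k. norm (D k)) ` {..<Suc t}"
        then obtain k where k: "k \<le> t" "v = norm (D k)" by (auto simp: less_Suc_eq_le)
        have "M k \<le> m"
        proof (cases "k = 0")
          case True then show ?thesis using M_nn[of "Suc t"] by (simp add: M_def m_def)
        next
          case False then obtain j where "j < k" "M k = a j" using M_ex by blast
          then show ?thesis using a_le_M[of j "Suc t"] k(1) by (simp add: m_def)
        qed
        hence e: "norm (x k - y k) \<le> m" using IH[OF k(1)] by simp
        have "a k \<le> m" unfolding m_def using k(1) a_le_M by simp
        hence "d k \<le> (m / mu) powr (1 / (1 + r))" by (rule d_bound)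
        then show "v \<le> 2 * L * m + (m / mu) powr (1 / (1 + r))"
        proof -
          have "2 * L * norm (x k - y k) \<le> 2 * L * m" using e assms(3) by (intro mult_left_mono) auto
          then show ?thesis using Dk[OF k(1)] k(2) \<open>d k \<le> _\<close> by linarith
        qed
      qed
      have mA: "m \<le> alpha" unfolding m_def using M_alpha Suc.prems by simp
      have "ereal (max_pert D (Suc t)) \<le> ereal (2 * L * m + (m / mu) powr (1 / (1 + r)))"
        using mp_le by simp
      also have "\<dots> \<le> gamma_inv gamma m" using assms(12) mA M_nn[of "Suc t"] unfolding m_def by blast
      finally have "gamma (max_pert D (Suc t)) \<le> m"
        using gamma_bound[OF gK _ mp_nn] M_nn unfolding m_def by blast
      with e1 have "norm (x (Suc t) - y (Suc t)) \<le> M (Suc t)" unfolding m_def by simp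
      then show ?case using IH by (auto simp: le_Suc_eq)
    qed
  qed
  show ?thesis
  proof (intro allI impI)
    fix t assume t: "1 \<le> t \<and> t \<le> T"
    have "norm (x t - y t) \<le> M t" using key[of t] t by simp
    then show "norm (traj f pol_star xi (\<lambda>_. 0) t - traj f pol xi (\<lambda>_. 0) t)
             \<le> Max ((\<lambda>k. mu * norm (pol (traj f pol_star xi (\<lambda>_. 0) k) - pol_star (traj f pol_star xi (\<lambda>_. 0) k)) powr (1 + r)) ` {..<t})"
      using t unfolding M_def a_def d_def x_def y_def by simp
  qed
qed

end
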